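(* Let $\Sigma$ be a smooth surface in $\mathbb{R}^3$ and let $\Gamma$ be a line of curvature on $\Sigma$ whose geodesic curvature on $\Sigma$ is a constant $c\neq 0$. Suppose that the principal curvature of $\Sigma$ along $\Gamma$ (i.e. the normal curvature of $\Sigma$ in the direction tangent to $\Gamma$) does not vanish at any point of $\Gamma$, and that $\Gamma$, regarded as a space curve in $\mathbb{R}^3$, has nowhere vanishing torsion. Then there exists a sphere of radius $\frac{1}{|c|}$ which intersects $\Sigma$ orthogonally along $\Gamma$.
   Context: A line of curvature on $\Sigma$ is a curve whose tangent vector is at every point a principal direction of $\Sigma$. *)

theory Defs
  imports "HOL-Analysis.Analysis"
begin

fun Ck_on :: "nat \<Rightarrow> ('a::euclidean_space \<Rightarrow> 'b::real_normed_vector) \<Rightarrow> 'a set \<Rightarrow> bool" where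
  "Ck_on 0 f U = continuous_on U f"
| "Ck_on (Suc k) f U =
     (f differentiable_on U \<and> (\<forall>i\<in>Basis. Ck_on k (\<lambda>x. frechet_derivative f (at x) i) U))"

definition smooth_on :: "('a::euclidean_space \<Rightarrow> 'b::real_normed_vector) \<Rightarrow> 'a set \<Rightarrow> bool" where
  "smooth_on f U \<longleftrightarrow> (\<forall>k. Ck_on k f U)"

definition Xu :: "(real^2 \<Rightarrow> real^3) \<Rightarrow> real^2 \<Rightarrow> real^3" where
  "Xu X p = frechet_derivative X (at p) (axis 1 1)"
definition Xv :: "(real^2 \<Rightarrow> real^3) \<Rightarrow> real^2 \<Rightarrow> real^3" where
  "Xv X p = frechet_derivative X (at p) (axis 2 1)"

definition regular_surface_patch :: "(real^2 \<Rightarrow> real^3) \<Rightarrow> (real^2) set \<Rightarrow> bool" where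
  "regular_surface_patch X U \<longleftrightarrow> open U \<and> U \<noteq> {} \<and> smooth_on X U \<and>
     (\<forall>p\<in>U. cross3 (Xu X p) (Xv X p) \<noteq> 0)"

definition unit_normal :: "(real^2 \<Rightarrow> real^3) \<Rightarrow> real^2 \<Rightarrow> real^3" where
  "unit_normal X p = (1 / norm (cross3 (Xu X p) (Xv X p))) *\<^sub>R cross3 (Xu X p) (Xv X p)"

definition d1 :: "(real \<Rightarrow> real^3) \<Rightarrow> real \<Rightarrow> real^3" where
  "d1 g t = vector_derivative g (at t)"
definition d2 :: "(real \<Rightarrow> real^3) \<Rightarrow> real \<Rightarrow> real^3" where
  "d2 g t = vector_derivative (d1 g) (at t)"
definition d3 :: "(real \<Rightarrow> real^3) \<Rightarrow> real \<Rightarrow> real^3" where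
  "d3 g t = vector_derivative (d2 g) (at t)"

definition torsion :: "(real \<Rightarrow> real^3) \<Rightarrow> real \<Rightarrow> real" where
  "torsion g t = (cross3 (d1 g t) (d2 g t) \<bullet> d3 g t) / (norm (cross3 (d1 g t) (d2 g t)))\<^sup>2"

text \<open>Curve on the surface: \<gamma> = X \<circ> \<alpha>, \<alpha> : I \<rightarrow> U.
  Shape operator S = -dN; the tangent vector \<gamma>'(t) = dX(\<alpha>'(t)) is a principal direction
  iff S(\<gamma>') = dN applied with a minus sign to \<alpha>' is a multiple of \<gamma>'.\<close>
definition line_of_curvature :: "(real^2 \<Rightarrow> real^3) \<Rightarrow> (real \<Rightarrow> real^2) \<Rightarrow> real set \<Rightarrow> bool" where
  "line_of_curvature X \<alpha> I \<longleftrightarrow>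
     (\<forall>t\<in>I. \<exists>k::real. - frechet_derivative (unit_normal X) (at (\<alpha> t)) (vector_derivative \<alpha> (at t))
                        = k *\<^sub>R d1 (X \<circ> \<alpha>) t)"

definition normal_curvature :: "(real^2 \<Rightarrow> real^3) \<Rightarrow> (real \<Rightarrow> real^2) \<Rightarrow> real \<Rightarrow> real" where
  "normal_curvature X \<alpha> t =
     (- frechet_derivative (unit_normal X) (at (\<alpha> t)) (vector_derivative \<alpha> (at t)) \<bullet> d1 (X \<circ> \<alpha>) t)
       / (norm (d1 (X \<circ> \<alpha>) t))\<^sup>2"

definition geodesic_curvature :: "(real^2 \<Rightarrow> real^3) \<Rightarrow> (real \<Rightarrow> real^2) \<Rightarrow> real \<Rightarrow> real" where
  "geodesic_curvature X \<alpha> t =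
     (d2 (X \<circ> \<alpha>) t \<bullet> cross3 (unit_normal X (\<alpha> t)) (d1 (X \<circ> \<alpha>) t)) / (norm (d1 (X \<circ> \<alpha>) t)) ^ 3"

end

theory Submission imports Defs begin

lemma smooth_X:
  assumes "smooth_on f U" "open U" "x \<in> U"
  shows "f differentiable at x"
    "\<And>i. i \<in> Basis \<Longrightarrow> (\<lambda>y. frechet_derivative f (at y) i) differentiable at x"
proof -
  have "Ck_on (Suc (Suc 0)) f U" using assms(1) unfolding smooth_on_def by blast
  then have "f differentiable_on U" "\<And>i. i \<in> Basis \<Longrightarrow> (\<lambda>y. frechet_derivative f (at y) i) differentiable_on U"
    by auto
  then show "f differentiable at x"
    "\<And>i. i \<in> Basis \<Longrightarrow> (\<lambda>y. frechet_derivative f (at y) i) differentiable at x"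
    using assms(2,3) differentiable_on_eq_differentiable_at by blast+
qed

lemma fd_decomp:
  fixes f :: "real^2 \<Rightarrow> 'b::real_normed_vector"
  assumes "f differentiable at x"
  shows "frechet_derivative f (at x) v = (v$1) *\<^sub>R frechet_derivative f (at x) (axis 1 1)
          + (v$2) *\<^sub>R frechet_derivative f (at x) (axis 2 1)"
proof -
  have L: "linear (frechet_derivative f (at x))" using linear_frechet_derivative[OF assms] .
  have "v = (v$1) *\<^sub>R axis 1 1 + (v$2) *\<^sub>R axis 2 1"
    by (simp add: vec_eq_iff forall_2 axis_def)
  then have "frechet_derivative f (at x) v = frechet_derivative f (at x) ((v$1) *\<^sub>R axis 1 1 + (v$2) *\<^sub>R axis 2 1)"
    by simp
  also have "\<dots> = (v$1) *\<^sub>R frechet_derivative f (at x) (axis 1 1)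
          + (v$2) *\<^sub>R frechet_derivative f (at x) (axis 2 1)"
    using L by (simp add: linear_add linear_scale)
  finally show ?thesis .
qed

lemma fd_vec:
  fixes f :: "real \<Rightarrow> 'b::real_normed_vector"
  assumes "f differentiable at x"
  shows "(f has_vector_derivative frechet_derivative f (at x) 1) (at x)"
proof -
  have L: "linear (frechet_derivative f (at x))" using linear_frechet_derivative[OF assms] .
  have e: "frechet_derivative f (at x) = (\<lambda>h. h *\<^sub>R frechet_derivative f (at x) 1)"
  proof
    fix h :: real
    have "frechet_derivative f (at x) h = frechet_derivative f (at x) (h *\<^sub>R 1)" by simp
    also have "\<dots> = h *\<^sub>R frechet_derivative f (at x) 1" using L by (simp only: linear_scale)
    finally show "frechet_derivative f (at x) h = h *\<^sub>R frechet_derivative f (at x) 1" .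
  qed
  show ?thesis unfolding has_vector_derivative_def
    using assms frechet_derivative_works e by metis
qed

lemma key_id:
  fixes N w x :: "real^3"
  assumes "N \<bullet> N = 1" "N \<bullet> w = 0"
  shows "(w \<bullet> w) *\<^sub>R cross3 N x = (x \<bullet> w) *\<^sub>R cross3 N w - (x \<bullet> cross3 N w) *\<^sub>R w"
  using assms unfolding cross3_def inner_vec_def sum_3 vec_eq_iff forall_3
  by (simp add: vector_def) algebra

lemma cross_bb: "bounded_bilinear (cross3 :: real^3 \<Rightarrow> real^3 \<Rightarrow> real^3)"
  using bilinear_cross bilinear_conv_bounded_bilinear by blast

lemma un_diff:
  assumes "Xu X differentiable at q" "Xv X differentiable at q"
    "cross3 (Xu X q) (Xv X q) \<noteq> 0"
  shows "unit_normal X differentiable at q"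
proof -
  define C where "C = (\<lambda>p. cross3 (Xu X p) (Xv X p))"
  have Cd: "C differentiable at q"
  proof -
    obtain f' g' where "(Xu X has_derivative f') (at q)" "(Xv X has_derivative g') (at q)"
      using assms(1,2) unfolding differentiable_def by blast
    from bounded_bilinear.FDERIV[OF cross_bb this]
    show ?thesis unfolding C_def differentiable_def by blast
  qed
  have nd: "norm differentiable at (C q)"
    using has_derivative_norm[of "C q"] assms(3) unfolding C_def differentiable_def by blast
  have "(norm \<circ> C) differentiable at q" by (rule differentiable_chain_at[OF Cd nd])
  then have "(\<lambda>p. norm (C p)) differentiable at q" by (simp add: o_def)
  then have "(\<lambda>p. 1 / norm (C p)) differentiable at q"
    using assms(3) by (intro differentiable_divide) (auto simp: C_def)
  then have "(\<lambda>p. (1 / norm (C p)) *\<^sub>R C p) differentiable at q"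
    using Cd by (intro differentiable_scaleR)
  moreover have "unit_normal X = (\<lambda>p. (1 / norm (C p)) *\<^sub>R C p)"
    by (rule ext) (simp add: unit_normal_def C_def)
  ultimately show ?thesis by simp
qed

lemma un_orth:
  assumes "X differentiable at q"
  shows "unit_normal X q \<bullet> frechet_derivative X (at q) v = 0"
proof -
  have "frechet_derivative X (at q) v = (v$1) *\<^sub>R Xu X q + (v$2) *\<^sub>R Xv X q"
    unfolding Xu_def Xv_def by (rule fd_decomp[OF assms])
  then show ?thesis unfolding unit_normal_def
    by (simp add: inner_add_right dot_cross_self)
qed

lemma un_norm:
  assumes "cross3 (Xu X q) (Xv X q) \<noteq> 0"
  shows "norm (unit_normal X q) = 1"
  using assms unfolding unit_normal_def by simp


theorem lemma3p1:
  fixes X :: "real^2 \<Rightarrow> real^3" and U :: "(real^2) set"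
    and \<alpha> :: "real \<Rightarrow> real^2" and I :: "real set" and c :: real
  assumes surf: "regular_surface_patch X U"
    and I: "open I" "is_interval I" "I \<noteq> {}"
    and curve: "smooth_on \<alpha> I" "\<alpha> ` I \<subseteq> U"
    and regular: "\<forall>t\<in>I. d1 (X \<circ> \<alpha>) t \<noteq> 0"
    and loc: "line_of_curvature X \<alpha> I"
    and geod: "\<forall>t\<in>I. geodesic_curvature X \<alpha> t = c" and c: "c \<noteq> 0"
    and kn: "\<forall>t\<in>I. normal_curvature X \<alpha> t \<noteq> 0"
    and tors: "\<forall>t\<in>I. torsion (X \<circ> \<alpha>) t \<noteq> 0"
  shows "\<exists>p::real^3. \<forall>t\<in>I. dist ((X \<circ> \<alpha>) t) p = 1 / \<bar>c\<bar> \<and>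
            ((X \<circ> \<alpha>) t - p) \<bullet> unit_normal X (\<alpha> t) = 0"
proof -
  have U: "open U" "smooth_on X U" "\<forall>p\<in>U. cross3 (Xu X p) (Xv X p) \<noteq> 0"
    using surf unfolding regular_surface_patch_def by auto
  have aU: "\<And>s. s \<in> I \<Longrightarrow> \<alpha> s \<in> U" using curve(2) by blast
  have Xd: "\<And>x. x \<in> U \<Longrightarrow> X differentiable at x" using smooth_X(1)[OF U(2,1)] by blast
  have b1: "axis 1 (1::real) \<in> (Basis :: (real^2) set)" "axis 2 (1::real) \<in> (Basis :: (real^2) set)"
    by (auto simp: Basis_vec_def)
  have XuE: "Xu X = (\<lambda>y. frechet_derivative X (at y) (axis 1 1))" by (rule ext) (simp add: Xu_def)
  have XvE: "Xv X = (\<lambda>y. frechet_derivative X (at y) (axis 2 1))" by (rule ext) (simp add: Xv_def)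
  have Xud: "\<And>x. x \<in> U \<Longrightarrow> Xu X differentiable at x"
    unfolding XuE using smooth_X(2)[OF U(2,1) _ b1(1)] by blast
  have Xvd: "\<And>x. x \<in> U \<Longrightarrow> Xv X differentiable at x"
    unfolding XvE using smooth_X(2)[OF U(2,1) _ b1(2)] by blast
  define A where "A = (\<lambda>s. frechet_derivative \<alpha> (at s) 1)"
  have ad: "\<And>s. s \<in> I \<Longrightarrow> \<alpha> differentiable at s" using smooth_X(1)[OF curve(1) I(1)] by blast
  have Ad: "\<And>s. s \<in> I \<Longrightarrow> A differentiable at s"
    unfolding A_def using smooth_X(2)[OF curve(1) I(1)] by simp
  have av: "\<And>s. s \<in> I \<Longrightarrow> (\<alpha> has_vector_derivative A s) (at s)"
    unfolding A_def using fd_vec ad by blast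
  have avd: "\<And>s. s \<in> I \<Longrightarrow> vector_derivative \<alpha> (at s) = A s"
    using av vector_derivative_at by blast
  define \<gamma> where "\<gamma> = X \<circ> \<alpha>"
  have gv: "\<And>s. s \<in> I \<Longrightarrow> (\<gamma> has_vector_derivative frechet_derivative X (at (\<alpha> s)) (A s)) (at s)"
  proof -
    fix s assume s: "s \<in> I"
    have "(X has_derivative frechet_derivative X (at (\<alpha> s))) (at (\<alpha> s))"
      using Xd[OF aU[OF s]] frechet_derivative_works by blast
    then have "(X has_derivative frechet_derivative X (at (\<alpha> s))) (at (\<alpha> s) within \<alpha> ` UNIV)"
      by (rule has_derivative_at_withinI)
    from vector_derivative_diff_chain_within[of \<alpha> "A s" s UNIV, OF _ this] av[OF s]
    show "(\<gamma> has_vector_derivative frechet_derivative X (at (\<alpha> s)) (A s)) (at s)"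
      unfolding \<gamma>_def by simp
  qed
  define W where "W = (\<lambda>s. (A s $ 1) *\<^sub>R Xu X (\<alpha> s) + (A s $ 2) *\<^sub>R Xv X (\<alpha> s))"
  have d1W: "\<And>s. s \<in> I \<Longrightarrow> d1 \<gamma> s = W s"
  proof -
    fix s assume s: "s \<in> I"
    have "d1 \<gamma> s = frechet_derivative X (at (\<alpha> s)) (A s)"
      unfolding d1_def using gv[OF s] vector_derivative_at by blast
    also have "\<dots> = W s" unfolding W_def Xu_def Xv_def by (rule fd_decomp[OF Xd[OF aU[OF s]]])
    finally show "d1 \<gamma> s = W s" .
  qed
  have Nn: "\<And>s. s \<in> I \<Longrightarrow> norm (unit_normal X (\<alpha> s)) = 1"
    using un_norm U(3) aU by blast
  have No: "\<And>s. s \<in> I \<Longrightarrow> unit_normal X (\<alpha> s) \<bullet> d1 \<gamma> s = 0"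
  proof -
    fix s assume s: "s \<in> I"
    have "d1 \<gamma> s = frechet_derivative X (at (\<alpha> s)) (A s)"
      unfolding d1_def using gv[OF s] vector_derivative_at by blast
    then show "unit_normal X (\<alpha> s) \<bullet> d1 \<gamma> s = 0" using un_orth[OF Xd[OF aU[OF s]]] by simp
  qed
  define P where "P = (\<lambda>s. \<gamma> s + (1/c) *\<^sub>R (inverse (norm (d1 \<gamma> s)) *\<^sub>R
        cross3 ((unit_normal X \<circ> \<alpha>) s) (d1 \<gamma> s)))"
  have Pd: "(P has_derivative (\<lambda>h. 0)) (at t within I)" if t: "t \<in> I" for t
  proof -
    have Wd: "W differentiable at t"
    proof -
      have c1: "(\<lambda>s. A s $ i) differentiable at t" for i
      proof -
        have "((\<lambda>v. v $ i) \<circ> A) differentiable at t"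
          by (rule differentiable_chain_at[OF Ad[OF t]]) (rule bounded_linear_imp_differentiable[OF bounded_linear_vec_nth])
        then show ?thesis by (simp add: o_def)
      qed
      have "(Xu X \<circ> \<alpha>) differentiable at t" by (rule differentiable_chain_at[OF ad[OF t] Xud[OF aU[OF t]]])
      moreover have "(Xv X \<circ> \<alpha>) differentiable at t" by (rule differentiable_chain_at[OF ad[OF t] Xvd[OF aU[OF t]]])
      ultimately show ?thesis unfolding W_def using c1
        by (intro differentiable_add differentiable_scaleR) (auto simp: o_def)
    qed
    define w where "w = d1 \<gamma> t"
    define w2 where "w2 = vector_derivative W (at t)"
    have w1v: "(d1 \<gamma> has_vector_derivative w2) (at t)"
      using has_vector_derivative_transform_within_open[OF Wd[unfolded vector_derivative_works] I(1) t]
        d1W unfolding w2_def by metis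
    have w2d: "d2 \<gamma> t = w2" unfolding d2_def using w1v vector_derivative_at by blast
    define N where "N = unit_normal X (\<alpha> t)"
    have Nd: "unit_normal X differentiable at (\<alpha> t)"
      using un_diff Xud Xvd U(3) aU[OF t] by blast
    have Nv: "((unit_normal X \<circ> \<alpha>) has_vector_derivative
        frechet_derivative (unit_normal X) (at (\<alpha> t)) (A t)) (at t)"
    proof -
      have "(unit_normal X has_derivative frechet_derivative (unit_normal X) (at (\<alpha> t))) (at (\<alpha> t))"
        using Nd frechet_derivative_works by blast
      then have "(unit_normal X has_derivative frechet_derivative (unit_normal X) (at (\<alpha> t))) (at (\<alpha> t) within \<alpha> ` UNIV)"
        by (rule has_derivative_at_withinI)
      from vector_derivative_diff_chain_within[of \<alpha> "A t" t UNIV, OF _ this] av[OF t]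
      show ?thesis by simp
    qed
    obtain k where k: "- frechet_derivative (unit_normal X) (at (\<alpha> t)) (A t) = k *\<^sub>R w"
      using loc t avd[OF t] unfolding line_of_curvature_def w_def \<gamma>_def by metis
    have Nv2: "((unit_normal X \<circ> \<alpha>) has_vector_derivative (- k *\<^sub>R w)) (at t)"
      using Nv k by (metis minus_minus scaleR_minus_left)
    have wne: "w \<noteq> 0" using regular t unfolding w_def \<gamma>_def by blast
    have nv: "((\<lambda>s. norm (d1 \<gamma> s)) has_vector_derivative (w2 \<bullet> sgn w)) (at t)"
    proof -
      have "(norm has_derivative (\<lambda>h. h \<bullet> sgn w)) (at (d1 \<gamma> t) within d1 \<gamma> ` UNIV)"
        using has_derivative_norm[OF wne] unfolding w_def by (rule has_derivative_at_withinI)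
      from vector_derivative_diff_chain_within[OF w1v this]
      show ?thesis by (simp add: o_def)
    qed
    have iv: "((\<lambda>s. inverse (norm (d1 \<gamma> s))) has_field_derivative
        (- ((w2 \<bullet> sgn w) * inverse (norm w ^ Suc (Suc 0))))) (at t)"
      using DERIV_inverse_fun[OF nv[unfolded has_real_derivative_iff_has_vector_derivative[symmetric]]] wne
      unfolding w_def by simp
    have cv: "((\<lambda>s. cross3 ((unit_normal X \<circ> \<alpha>) s) (d1 \<gamma> s)) has_vector_derivative
         (cross3 N w2 + cross3 (- k *\<^sub>R w) w)) (at t)"
      using bounded_bilinear.has_vector_derivative[OF cross_bb Nv2 w1v] unfolding N_def w_def by simp
    have Pv: "(P has_vector_derivative
        (w + (1/c) *\<^sub>R (inverse (norm w) *\<^sub>R (cross3 N w2 + cross3 (- k *\<^sub>R w) w)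
           + (- ((w2 \<bullet> sgn w) * inverse (norm w ^ Suc (Suc 0)))) *\<^sub>R cross3 N w))) (at t)"
      unfolding P_def
      apply (rule has_vector_derivative_add)
      subgoal using gv[OF t] d1W[OF t] unfolding w_def d1_def using vector_derivative_at by metis
      using has_vector_derivative_scaleR[OF DERIV_const[of "1/c"] has_vector_derivative_scaleR[OF iv cv]]
      unfolding N_def w_def by simp
    have zero: "w + (1/c) *\<^sub>R (inverse (norm w) *\<^sub>R (cross3 N w2 + cross3 (- k *\<^sub>R w) w)
           + (- ((w2 \<bullet> sgn w) * inverse (norm w ^ Suc (Suc 0)))) *\<^sub>R cross3 N w) = 0"
    proof -
      define v where "v = norm w"
      have vp: "v > 0" using wne unfolding v_def by simp
      have NN: "N \<bullet> N = 1" using Nn[OF t] unfolding N_def by (simp add: dot_square_norm)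
      have Nw: "N \<bullet> w = 0" using No[OF t] unfolding N_def w_def \<gamma>_def by simp
      have ww: "w \<bullet> w = v^2" unfolding v_def by (simp add: dot_square_norm)
      have gc: "w2 \<bullet> cross3 N w = c * v^3"
        using geod t vp unfolding geodesic_curvature_def w2d[symmetric] N_def w_def v_def \<gamma>_def
        by (auto simp: field_simps)
      have K: "(v^2) *\<^sub>R cross3 N w2 = (w2 \<bullet> w) *\<^sub>R cross3 N w - (c * v^3) *\<^sub>R w"
        using key_id[OF NN Nw, of w2] ww gc by simp
      have Y: "cross3 N w2 = ((w2 \<bullet> w) / v^2) *\<^sub>R cross3 N w - (c * v) *\<^sub>R w"
      proof -
        have "cross3 N w2 = inverse (v^2) *\<^sub>R ((v^2) *\<^sub>R cross3 N w2)" using vp by simp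
        also have "\<dots> = ((w2 \<bullet> w) / v^2) *\<^sub>R cross3 N w - (c * v) *\<^sub>R w"
          unfolding K using vp by (simp add: scaleR_diff_right field_simps power3_eq_cube power2_eq_square)
        finally show ?thesis .
      qed
      have sg: "w2 \<bullet> sgn w = (w2 \<bullet> w) / v" unfolding v_def sgn_div_norm
        by (simp add: inner_commute divide_inverse)
      have ck: "cross3 (- k *\<^sub>R w) w = 0" by (simp add: cross_mult_left)
      show ?thesis unfolding ck sg Y v_def[symmetric] using vp c
        by (simp add: scaleR_diff_right scaleR_add_right field_simps power2_eq_square)
    qed
    have "(P has_derivative (\<lambda>h. h *\<^sub>R 0)) (at t)"
      using Pv[unfolded zero] unfolding has_vector_derivative_def .
    then show ?thesis by (simp add: has_derivative_at_withinI)
  qed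
  obtain p where p: "\<forall>s\<in>I. P s = p"
    using has_derivative_zero_constant[OF is_interval_convex[OF I(2)] Pd] by blast
  show ?thesis
  proof (intro exI ballI conjI)
    fix s assume s: "s \<in> I"
    define w where "w = d1 \<gamma> s"
    define N where "N = unit_normal X (\<alpha> s)"
    have wne: "w \<noteq> 0" using regular s unfolding w_def \<gamma>_def by blast
    have Nw: "N \<bullet> w = 0" using No[OF s] unfolding N_def w_def by simp
    have nN: "norm N = 1" using Nn[OF s] unfolding N_def .
    have nc: "norm (cross3 N w) = norm w"
    proof -
      have "(norm (cross3 N w))\<^sup>2 = (norm w)\<^sup>2" using norm_cross_dot[of N w] Nw nN by simp
      then show ?thesis by (simp add: power2_eq_iff_nonneg)
    qed
    have D: "(X \<circ> \<alpha>) s - p = - ((1/c) *\<^sub>R (inverse (norm w) *\<^sub>R cross3 N w))"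
      using p s unfolding P_def w_def N_def \<gamma>_def by (auto simp: algebra_simps)
    show "dist ((X \<circ> \<alpha>) s) p = 1 / \<bar>c\<bar>"
      unfolding dist_norm D using nc wne by simp
    show "((X \<circ> \<alpha>) s - p) \<bullet> unit_normal X (\<alpha> s) = 0"
      unfolding D N_def[symmetric] by (simp add: cross_mult_left dot_cross_self inner_commute)
  qed
qed

end
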